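(* Let $\rho_{ab}$ be a two-qubit state (density matrix on $\mathbb{C}^2\otimes\mathbb{C}^2$), with entries $\rho_{ij}$ in the product computational basis $\{|00\rangle,|01\rangle,|10\rangle,|11\rangle\}$ indexed by $i,j\in\{1,2,3,4\}$. Suppose one can choose arguments $\theta_{ij}\in[0,2\pi]$ of the entries ($\rho_{ij}=|\rho_{ij}|e^{\mathfrak{i}\theta_{ij}}$, arbitrary when $\rho_{ij}=0$) such that for all $i,k,j$ there is an integer $n$ with $\theta_{ik}+\theta_{kj}=2n\pi+\theta_{ij}$. Let $\rho_a=\mathrm{Tr}_b\rho_{ab}$ and $\rho_b=\mathrm{Tr}_a\rho_{ab}$. Then $$F_c(\rho_a)+F_c(\rho_b)\le 2F_c(\rho_{ab})+\frac12.$$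
   Context: Coherence is taken with respect to the computational (product) basis. For a single qubit, the maximally coherent states are $\mathcal{M}=\{\frac{1}{\sqrt2}(e^{\mathfrak{i}\theta_0}|0\rangle+e^{\mathfrak{i}\theta_1}|1\rangle):\theta_0,\theta_1\in[0,2\pi]\}$ and $F_c(\sigma)=\max_{|\phi\rangle\in\mathcal{M}}\langle\phi|\sigma|\phi\rangle$. For two qubits, the bipartite maximally coherent states are $\mathcal{M}_2=\{\frac12\sum_{k,l=0}^{1}e^{\mathfrak{i}\theta_{kl}}|kl\rangle:\theta_{kl}\in[0,2\pi]\}$ and the (global) coherence fraction is $F_c(\rho_{ab})=\max_{|\phi\rangle\in\mathcal{M}_2}\langle\phi|\rho_{ab}|\phi\rangle$. *)

theory Defs
  imports "HOL-Analysis.Analysis"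
begin

text \<open>A d-dimensional matrix is represented by its entries \<open>M i j\<close> for \<open>i, j < d\<close>
  (0-based; index \<open>2*k + l\<close> corresponds to the product basis vector |kl>).\<close>

definition density_matrix :: "nat \<Rightarrow> (nat \<Rightarrow> nat \<Rightarrow> complex) \<Rightarrow> bool" where
  "density_matrix d M \<longleftrightarrow>
     (\<forall>i<d. \<forall>j<d. M j i = cnj (M i j)) \<and>
     (\<forall>v :: nat \<Rightarrow> complex. 0 \<le> Re (\<Sum>i<d. \<Sum>j<d. cnj (v i) * M i j * v j)) \<and>
     (\<Sum>i<d. M i i) = 1"

text \<open>Expectation \<open>\<langle>\<phi>|M|\<phi>\<rangle>\<close> for the maximally coherent state
  \<open>\<phi> = d^(-1/2) \<Sum>_i e^(i \<theta>_i) |i>\<close>.\<close>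
definition mc_expect :: "nat \<Rightarrow> (nat \<Rightarrow> nat \<Rightarrow> complex) \<Rightarrow> (nat \<Rightarrow> real) \<Rightarrow> complex" where
  "mc_expect d M \<theta> =
     (\<Sum>i<d. \<Sum>j<d. cnj (cis (\<theta> i) / complex_of_real (sqrt (real d))) * M i j
                        * (cis (\<theta> j) / complex_of_real (sqrt (real d))))"

text \<open>Coherence fraction: maximum over all maximally coherent states (phases in [0,2pi]).
  For Hermitian M the expectation is real, so we take its real part.\<close>
definition coh_frac :: "nat \<Rightarrow> (nat \<Rightarrow> nat \<Rightarrow> complex) \<Rightarrow> real" where
  "coh_frac d M = (SUP \<theta>\<in>{\<theta>. \<forall>i<d. \<theta> i \<in> {0..2*pi}}. Re (mc_expect d M \<theta>))"

definition ptrace_b :: "(nat \<Rightarrow> nat \<Rightarrow> complex) \<Rightarrow> nat \<Rightarrow> nat \<Rightarrow> complex" where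
  "ptrace_b M i j = (\<Sum>k<2. M (2*i + k) (2*j + k))"

definition ptrace_a :: "(nat \<Rightarrow> nat \<Rightarrow> complex) \<Rightarrow> nat \<Rightarrow> nat \<Rightarrow> complex" where
  "ptrace_a M k l = (\<Sum>i<2. M (2*i + k) (2*i + l))"

end

theory Submission
  imports Defs
begin

lemma mc_expect_alt:
  assumes "d > 0"
  shows "mc_expect d M \<theta> = (\<Sum>i<d. \<Sum>j<d. cnj (cis (\<theta> i)) * M i j * cis (\<theta> j)) / of_real (real d)"
proof -
  define S where "S = complex_of_real (sqrt (real d))"
  have sq: "sqrt (real d) * sqrt (real d) = real d" by simp
  have s: "S * S = of_real (real d)"
    unfolding S_def of_real_mult[symmetric] sq ..
  have cS: "cnj S = S" unfolding S_def by (rule complex_cnj_complex_of_real)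
  have t: "cnj (cis (\<theta> i) / S) * M i j * (cis (\<theta> j) / S)
        = cnj (cis (\<theta> i)) * M i j * cis (\<theta> j) / of_real (real d)" for i j
  proof -
    have "cnj (cis (\<theta> i) / S) * M i j * (cis (\<theta> j) / S) = (cnj (cis (\<theta> i)) / S) * M i j * (cis (\<theta> j) / S)"
      by (simp only: complex_cnj_divide cS)
    also have "\<dots> = cnj (cis (\<theta> i)) * M i j * cis (\<theta> j) / (S * S)"
      by (simp only: times_divide_eq_left times_divide_eq_right divide_divide_eq_left mult.assoc)
    finally show ?thesis unfolding s .
  qed
  show ?thesis unfolding mc_expect_def S_def[symmetric] t by (simp only: sum_divide_distrib)
qed

lemma re_bound:
  assumes "d > 0"
  shows "Re (mc_expect d M \<theta>) \<le> (\<Sum>i<d. \<Sum>j<d. cmod (M i j)) / real d"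
proof -
  define X where "X = (\<Sum>i<d. \<Sum>j<d. cnj (cis (\<theta> i)) * M i j * cis (\<theta> j))"
  have "Re (mc_expect d M \<theta>) \<le> cmod (mc_expect d M \<theta>)" by (rule complex_Re_le_cmod)
  also have "\<dots> = cmod X / real d"
    unfolding mc_expect_alt[OF assms] X_def[symmetric] norm_divide norm_of_real abs_of_nat ..
  also have "cmod X \<le> (\<Sum>i<d. \<Sum>j<d. cmod (M i j))"
  proof -
    have "cmod X \<le> (\<Sum>i<d. cmod (\<Sum>j<d. cnj (cis (\<theta> i)) * M i j * cis (\<theta> j)))"
      unfolding X_def by (rule norm_sum)
    also have "\<dots> \<le> (\<Sum>i<d. \<Sum>j<d. cmod (cnj (cis (\<theta> i)) * M i j * cis (\<theta> j)))"
      by (intro sum_mono norm_sum)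
    also have "\<dots> = (\<Sum>i<d. \<Sum>j<d. cmod (M i j))"
      by (simp only: norm_mult complex_mod_cnj norm_cis mult_1_left mult_1_right)
    finally show ?thesis .
  qed
  hence "cmod X / real d \<le> (\<Sum>i<d. \<Sum>j<d. cmod (M i j)) / real d"
    by (rule divide_right_mono) simp
  finally show ?thesis .
qed


lemma ne: "(\<lambda>_. 0) \<in> {\<theta>::nat\<Rightarrow>real. \<forall>i<d. \<theta> i \<in> {0..2*pi}}"
proof -
  have "(0::real) \<le> 2 * pi" using pi_ge_zero by linarith
  then show ?thesis by simp
qed
lemma coh_upper:
  assumes "d > 0"
  shows "coh_frac d M \<le> (\<Sum>i<d. \<Sum>j<d. cmod (M i j)) / real d"
  unfolding coh_frac_def
proof (rule cSUP_least)
  show "{\<theta>. \<forall>i<d. \<theta> i \<in> {0..2*pi}} \<noteq> {}"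
  proof
    assume h: "{\<theta>. \<forall>i<d. \<theta> i \<in> {0..2*pi}} = {}"
    from ne[of d] show False unfolding h by (rule emptyE)
  qed
next
  fix x assume "x \<in> {\<theta>::nat\<Rightarrow>real. \<forall>i<d. \<theta> i \<in> {0..2 * pi}}"
  show "Re (mc_expect d M x) \<le> (\<Sum>i<d. \<Sum>j<d. cmod (M i j)) / real d"
    by (rule re_bound[OF assms])
qed
lemma coh_lower:
  assumes "d > 0" "\<forall>i<d. \<theta> i \<in> {0..2*pi}"
  shows "Re (mc_expect d M \<theta>) \<le> coh_frac d M"
  unfolding coh_frac_def
proof (rule cSUP_upper)
  show "\<theta> \<in> {\<theta>. \<forall>i<d. \<theta> i \<in> {0..2 * pi}}" using assms(2) by simp
  show "bdd_above ((\<lambda>\<theta>. Re (mc_expect d M \<theta>)) ` {\<theta>. \<forall>i<d. \<theta> i \<in> {0..2 * pi}})"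
  proof (rule bdd_aboveI)
    fix x assume "x \<in> (\<lambda>\<theta>. Re (mc_expect d M \<theta>)) ` {\<theta>. \<forall>i<d. \<theta> i \<in> {0..2 * pi}}"
    then obtain t where "x = Re (mc_expect d M t)" by blast
    then show "x \<le> (\<Sum>i<d. \<Sum>j<d. cmod (M i j)) / real d" using re_bound[OF assms(1)] by simp
  qed
qed

lemma delta_sum:
  fixes M :: "nat \<Rightarrow> nat \<Rightarrow> complex"
  assumes "i < d"
  shows "(\<Sum>k<d. \<Sum>j<d. cnj (if k = i then 1 else 0) * M k j * (if j = i then 1 else 0)) = M i i"
proof -
  have inner: "(\<Sum>j<d. cnj (if k = i then 1 else 0) * M k j * (if j = i then 1 else 0))
      = (if k = i then M i i else 0)" for k
  proof -
    have "(\<Sum>j<d. cnj (if k = i then 1 else 0) * M k j * (if j = i then 1 else 0))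
        = (\<Sum>j<d. if j = i then cnj (if k = i then 1 else 0) * M k j else 0)"
      by (intro sum.cong) auto
    also have "\<dots> = cnj (if k = i then 1 else 0) * M k i" using assms by simp
    also have "\<dots> = (if k = i then M i i else 0)" by simp
    finally show ?thesis .
  qed
  have "(\<Sum>k<d. \<Sum>j<d. cnj (if k = i then 1 else 0) * M k j * (if j = i then 1 else 0))
     = (\<Sum>k<d. if k = i then M i i else 0)" by (simp only: inner)
  also have "\<dots> = M i i" using assms by simp
  finally show ?thesis .
qed

lemma diag_nonneg: fixes \<rho> :: "nat \<Rightarrow> nat \<Rightarrow> complex"
  assumes "density_matrix 4 \<rho>" "i < 4" shows "0 \<le> Re (\<rho> i i)"
proof -
  define v :: "nat \<Rightarrow> complex" where "v k = (if k = i then 1 else 0)" for k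
  have "0 \<le> Re (\<Sum>k<4. \<Sum>j<4. cnj (v k) * \<rho> k j * v j)"
      using assms(1) unfolding density_matrix_def by blast
  also have "(\<Sum>k<4. \<Sum>j<4. cnj (v k) * \<rho> k j * v j) = \<rho> i i"
    unfolding v_def by (rule delta_sum[OF assms(2)])
  finally show "0 \<le> Re (\<rho> i i)" .
qed

theorem theorem5:
  fixes \<rho> :: "nat \<Rightarrow> nat \<Rightarrow> complex"
  assumes "density_matrix 4 \<rho>"
    and "\<exists>\<theta> :: nat \<Rightarrow> nat \<Rightarrow> real.
           (\<forall>i<4. \<forall>j<4. \<theta> i j \<in> {0..2*pi} \<and>
                         \<rho> i j = complex_of_real (cmod (\<rho> i j)) * cis (\<theta> i j)) \<and>
           (\<forall>i<4. \<forall>k<4. \<forall>j<4. \<exists>n::int. \<theta> i k + \<theta> k j = 2 * real_of_int n * pi + \<theta> i j)"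
  shows "coh_frac 2 (ptrace_b \<rho>) + coh_frac 2 (ptrace_a \<rho>) \<le> 2 * coh_frac 4 \<rho> + 1/2"
proof -
  obtain \<theta> :: "nat \<Rightarrow> nat \<Rightarrow> real" where th1: "\<forall>i<4. \<forall>j<4. \<theta> i j \<in> {0..2*pi} \<and>
                         \<rho> i j = complex_of_real (cmod (\<rho> i j)) * cis (\<theta> i j)"
    and th2: "\<forall>i<4. \<forall>k<4. \<forall>j<4. \<exists>n::int. \<theta> i k + \<theta> k j = 2 * real_of_int n * pi + \<theta> i j"
    using assms(2) by blast
  define \<phi> where "\<phi> i = \<theta> i 0" for i
  have tm: "cnj (cis (\<phi> i)) * \<rho> i j * cis (\<phi> j) = complex_of_real (cmod (\<rho> i j))"
    if ij: "i < 4" "j < 4" for i j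
  proof -
    obtain n :: int where n: "\<theta> i j + \<theta> j 0 = 2 * real_of_int n * pi + \<theta> i 0"
      using th2 ij by force
    define c where "c = cmod (\<rho> i j)"
    have r: "\<rho> i j = complex_of_real c * cis (\<theta> i j)" using th1 ij unfolding c_def by blast
    have "cnj (cis (\<phi> i)) * \<rho> i j * cis (\<phi> j)
        = complex_of_real c * (cis (- \<theta> i 0) * cis (\<theta> i j) * cis (\<theta> j 0))"
      unfolding r by (simp add: \<phi>_def cis_cnj mult_ac)
    also have "cis (- \<theta> i 0) * cis (\<theta> i j) * cis (\<theta> j 0) = cis (\<theta> i j + \<theta> j 0 - \<theta> i 0)"
      by (simp add: cis_mult algebra_simps)
    also have "cis (\<theta> i j + \<theta> j 0 - \<theta> i 0) = cis (2 * real_of_int n * pi)" using n by simp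
    also have "\<dots> = 1" using cis_multiple_2pi[of "real_of_int n"] by (simp add: mult_ac)
    finally show ?thesis by (simp add: c_def)
  qed
  have lower: "(\<Sum>i<4. \<Sum>j<4. cmod (\<rho> i j)) / 4 \<le> coh_frac 4 \<rho>"
  proof -
    have "mc_expect 4 \<rho> \<phi> = (\<Sum>i<4. \<Sum>j<4. complex_of_real (cmod (\<rho> i j))) / 4"
      by (simp add: mc_expect_alt tm)
    hence "mc_expect 4 \<rho> \<phi> = complex_of_real ((\<Sum>i<4. \<Sum>j<4. cmod (\<rho> i j)) / 4)"
      by simp
    hence "Re (mc_expect 4 \<rho> \<phi>) = (\<Sum>i<4. \<Sum>j<4. cmod (\<rho> i j)) / 4"
      by (metis Re_complex_of_real)
    moreover have "Re (mc_expect 4 \<rho> \<phi>) \<le> coh_frac 4 \<rho>"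
      by (rule coh_lower) (use th1 in \<open>auto simp: \<phi>_def\<close>)
    ultimately show ?thesis by simp
  qed
  have diag: "cmod (\<rho> i i) = Re (\<rho> i i)" if "i < 4" for i
  proof -
    have h: "\<rho> i i = cnj (\<rho> i i)" using assms(1) that unfolding density_matrix_def by blast
    have "0 \<le> Re (\<rho> i i)" by (rule diag_nonneg[OF assms(1) that])
    moreover have "Im (\<rho> i i) = 0"
    proof -
      from h have "Im (\<rho> i i) = Im (cnj (\<rho> i i))" by (rule arg_cong)
      thus ?thesis by simp
    qed
    ultimately show ?thesis by (simp add: cmod_def)
  qed
  have tr: "(\<Sum>i<4. \<rho> i i) = 1" using assms(1) unfolding density_matrix_def by blast
  hence "Re (\<Sum>i<4. \<rho> i i) = 1" by simp
  hence "(\<Sum>i<4. Re (\<rho> i i)) = 1" by simp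
  hence tr': "Re (\<rho> 0 0) + Re (\<rho> 1 1) + Re (\<rho> 2 2) + Re (\<rho> 3 3) = 1"
    by (simp add: eval_nat_numeral)
  have ub: "coh_frac 2 (ptrace_b \<rho>) \<le> (\<Sum>i<2. \<Sum>j<2. cmod (ptrace_b \<rho> i j)) / 2"
    using coh_upper[of 2] by simp
  also have "\<dots> = (cmod (\<rho> 0 0 + \<rho> 1 1) + cmod (\<rho> 0 2 + \<rho> 1 3) + cmod (\<rho> 2 0 + \<rho> 3 1)
       + cmod (\<rho> 2 2 + \<rho> 3 3)) / 2"
    by (simp add: eval_nat_numeral ptrace_b_def)
  finally have ub': "coh_frac 2 (ptrace_b \<rho>) \<le> (cmod (\<rho> 0 0 + \<rho> 1 1) + cmod (\<rho> 0 2 + \<rho> 1 3) + cmod (\<rho> 2 0 + \<rho> 3 1)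
       + cmod (\<rho> 2 2 + \<rho> 3 3)) / 2" .
  have ua: "coh_frac 2 (ptrace_a \<rho>) \<le> (\<Sum>i<2. \<Sum>j<2. cmod (ptrace_a \<rho> i j)) / 2"
    using coh_upper[of 2] by simp
  also have "\<dots> = (cmod (\<rho> 0 0 + \<rho> 2 2) + cmod (\<rho> 0 1 + \<rho> 2 3) + cmod (\<rho> 1 0 + \<rho> 3 2)
       + cmod (\<rho> 1 1 + \<rho> 3 3)) / 2"
    by (simp add: eval_nat_numeral ptrace_a_def)
  finally have ua': "coh_frac 2 (ptrace_a \<rho>) \<le> (cmod (\<rho> 0 0 + \<rho> 2 2) + cmod (\<rho> 0 1 + \<rho> 2 3) + cmod (\<rho> 1 0 + \<rho> 3 2)
       + cmod (\<rho> 1 1 + \<rho> 3 3)) / 2" .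
  have "(\<Sum>i<4. \<Sum>j<4. cmod (\<rho> i j)) = 
      cmod (\<rho> 0 0) + cmod (\<rho> 0 1) + cmod (\<rho> 0 2) + cmod (\<rho> 0 3) +
      cmod (\<rho> 1 0) + cmod (\<rho> 1 1) + cmod (\<rho> 1 2) + cmod (\<rho> 1 3) +
      cmod (\<rho> 2 0) + cmod (\<rho> 2 1) + cmod (\<rho> 2 2) + cmod (\<rho> 2 3) +
      cmod (\<rho> 3 0) + cmod (\<rho> 3 1) + cmod (\<rho> 3 2) + cmod (\<rho> 3 3)"
    by (simp add: eval_nat_numeral)
  with lower have lower': "(cmod (\<rho> 0 0) + cmod (\<rho> 0 1) + cmod (\<rho> 0 2) + cmod (\<rho> 0 3) +
      cmod (\<rho> 1 0) + cmod (\<rho> 1 1) + cmod (\<rho> 1 2) + cmod (\<rho> 1 3) +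
      cmod (\<rho> 2 0) + cmod (\<rho> 2 1) + cmod (\<rho> 2 2) + cmod (\<rho> 2 3) +
      cmod (\<rho> 3 0) + cmod (\<rho> 3 1) + cmod (\<rho> 3 2) + cmod (\<rho> 3 3)) / 4 \<le> coh_frac 4 \<rho>"
    by simp
  have ds: "cmod (\<rho> 0 0) = Re (\<rho> 0 0)" "cmod (\<rho> 1 1) = Re (\<rho> 1 1)"
    "cmod (\<rho> 2 2) = Re (\<rho> 2 2)" "cmod (\<rho> 3 3) = Re (\<rho> 3 3)"
    by (simp_all add: diag)
  have ub2: "2 * coh_frac 2 (ptrace_b \<rho>) \<le> cmod (\<rho> 0 0 + \<rho> 1 1) + cmod (\<rho> 0 2 + \<rho> 1 3) + cmod (\<rho> 2 0 + \<rho> 3 1)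
       + cmod (\<rho> 2 2 + \<rho> 3 3)" using ub' by simp
  have ua2: "2 * coh_frac 2 (ptrace_a \<rho>) \<le> cmod (\<rho> 0 0 + \<rho> 2 2) + cmod (\<rho> 0 1 + \<rho> 2 3) + cmod (\<rho> 1 0 + \<rho> 3 2)
       + cmod (\<rho> 1 1 + \<rho> 3 3)" using ua' by simp
  have lower2: "cmod (\<rho> 0 0) + cmod (\<rho> 0 1) + cmod (\<rho> 0 2) + cmod (\<rho> 0 3) +
      cmod (\<rho> 1 0) + cmod (\<rho> 1 1) + cmod (\<rho> 1 2) + cmod (\<rho> 1 3) +
      cmod (\<rho> 2 0) + cmod (\<rho> 2 1) + cmod (\<rho> 2 2) + cmod (\<rho> 2 3) +
      cmod (\<rho> 3 0) + cmod (\<rho> 3 1) + cmod (\<rho> 3 2) + cmod (\<rho> 3 3) \<le> 4 * coh_frac 4 \<rho>"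
    using lower' by simp
  define O8 where "O8 = cmod (\<rho> 0 2) + cmod (\<rho> 1 3) + cmod (\<rho> 2 0) + cmod (\<rho> 3 1)
     + cmod (\<rho> 0 1) + cmod (\<rho> 2 3) + cmod (\<rho> 1 0) + cmod (\<rho> 3 2)"
  define R4 where "R4 = cmod (\<rho> 0 3) + cmod (\<rho> 3 0) + cmod (\<rho> 1 2) + cmod (\<rho> 2 1)"
  have D: "cmod (\<rho> 0 0) + cmod (\<rho> 1 1) + cmod (\<rho> 2 2) + cmod (\<rho> 3 3) = 1"
    using tr' ds by linarith
  have e1: "cmod (\<rho> 0 0 + \<rho> 1 1) + cmod (\<rho> 2 2 + \<rho> 3 3) + cmod (\<rho> 0 0 + \<rho> 2 2) + cmod (\<rho> 1 1 + \<rho> 3 3) \<le> 2"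
    using D norm_triangle_ineq[of "\<rho> 0 0" "\<rho> 1 1"] norm_triangle_ineq[of "\<rho> 2 2" "\<rho> 3 3"]
      norm_triangle_ineq[of "\<rho> 0 0" "\<rho> 2 2"] norm_triangle_ineq[of "\<rho> 1 1" "\<rho> 3 3"]
    by linarith
  have e2: "cmod (\<rho> 0 2 + \<rho> 1 3) + cmod (\<rho> 2 0 + \<rho> 3 1) + cmod (\<rho> 0 1 + \<rho> 2 3) + cmod (\<rho> 1 0 + \<rho> 3 2) \<le> O8"
    unfolding O8_def
    using norm_triangle_ineq[of "\<rho> 0 2" "\<rho> 1 3"] norm_triangle_ineq[of "\<rho> 2 0" "\<rho> 3 1"]
      norm_triangle_ineq[of "\<rho> 0 1" "\<rho> 2 3"] norm_triangle_ineq[of "\<rho> 1 0" "\<rho> 3 2"]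
    by linarith
  have R0: "0 \<le> R4" unfolding R4_def by simp
  have l3: "1 + O8 + R4 \<le> 4 * coh_frac 4 \<rho>"
  proof -
    have "1 + O8 + R4 = cmod (\<rho> 0 0) + cmod (\<rho> 0 1) + cmod (\<rho> 0 2) + cmod (\<rho> 0 3) +
      cmod (\<rho> 1 0) + cmod (\<rho> 1 1) + cmod (\<rho> 1 2) + cmod (\<rho> 1 3) +
      cmod (\<rho> 2 0) + cmod (\<rho> 2 1) + cmod (\<rho> 2 2) + cmod (\<rho> 2 3) +
      cmod (\<rho> 3 0) + cmod (\<rho> 3 1) + cmod (\<rho> 3 2) + cmod (\<rho> 3 3)"
      unfolding O8_def R4_def D[symmetric] by (simp add: algebra_simps)
    then show ?thesis using lower2 by simp
  qed
  have "2 * coh_frac 2 (ptrace_b \<rho>) + 2 * coh_frac 2 (ptrace_a \<rho>) \<le> 2 + O8"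
    using ub2 ua2 e1 e2 by linarith
  hence "2 * coh_frac 2 (ptrace_b \<rho>) + 2 * coh_frac 2 (ptrace_a \<rho>) \<le> 4 * coh_frac 4 \<rho> + 1"
    using l3 R0 by linarith
  then show ?thesis by linarith
qed

end
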